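(* Let $\Sigma$ be a finite alphabet and let $s_1,s_2\in\Sigma^n$ be two related strings of length $n$ (each symbol occurs equally often in both). Let $B=\{b_i : i\in I\}$ be the set of all blocks of length at least two, listed in an arbitrary fixed order $i_0,i_1,\dots,i_{m-1}$ ($m=|I|$), and let $D$ be the decision diagram constructed from the dynamic program described in the context (one node per reachable state on each stage, arcs and weights given by the transition and cost functions, root weight $n$, terminal $\mathbf T$). Then $D$ is an exact decision diagram for the MCSP, i.e. the set of assignments $x\in\{0,1\}^{I\cup\{\lambda\}}$ encoded by the $r$–$\mathbf T$ paths of $D$ equals the set of feasible assignments of the MCSP formulation (those with $x_\lambda=1$ and with $\neg(x_i\wedge x_j)$ for every pair of overlapping blocks $b_i,b_j$), the weight of the path encoding a feasible $x$ equals $n+\sum_{i\in I:\,x_i=1}(1-t_i)$, which is the number of substrings in the common partition of $s_1$ and $s_2$ consisting of the chosen blocks together with single symbols for all uncovered positions, and consequently $\mathrm{Opt}(D)=\mathrm{Opt}(\mathrm{MCSP})$: the minimum-weight $r$–$\mathbf T$ paths encode exactly the optimal feasible assignments, and the minimum path weight equals the minimum size of a common partition of $s_1$ and $s_2$.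
   Context: For a string $s$ of length $n$ and $0\le i<j\le n$, $s[i:j]$ denotes the substring consisting of the symbols at positions $i,\dots,j-1$ (positions indexed from $0$). $1^n$ ($0^n$) denotes the string of $n$ ones (zeros). Minimum Common String Partition (MCSP): for related strings $s_1,s_2$, a solution is a partition of $s_1$ and of $s_2$ into multisets $P_1,P_2$ of non-overlapping consecutive substrings with $P_1=P_2$; its value is $|P_1|=|P_2|$, to be minimized. A block is a triple $b=(k^1,k^2,t)$ with $t\in\{1,\dots,n\}$, $k^1,k^2\in\{0,\dots,n-t\}$ and $s_1[k^1:k^1+t]=s_2[k^2:k^2+t]$. Blocks $b_i=(k_i^1,k_i^2,t_i)$ and $b_j=(k_j^1,k_j^2,t_j)$ overlap if $k_i^1-t_j<k_j^1<k_i^1+t_i$ or $k_i^2-t_j<k_j^2<k_i^2+t_i$. $B$ is the set of blocks with $t\ge2$, indexed by $I$; $\lambda\notin I$ is an extra index. The MCSP formulation has Boolean variables $x_i$, $i\in I\cup\{\lambda\}$, constraints $\neg(x_i\wedge x_j)$ for overlapping $b_i,b_j$, and objective $n+\sum_{i\in I: x_i=1}(1-t_i)$. Dynamic program: states are pairs $(bs^1,bs^2)$ of bitstrings in $\{0,1\}^n$. Stage $0$ contains only the root state $(1^n,1^n)$; the variables are processed in the order $x_{i_0},\dots,x_{i_{m-1}},x_\lambda$, and the final stage contains only the terminal state $(0^n,0^n)$. Transitions from state $(bs^1,bs^2)$ on variable $x_i$: for $i\in I$, $x_i=0$ leads to $(bs^1,bs^2)$ with cost $0$; $x_i=1$ is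 defined only if $bs^c[j]=1$ for all $k_i^c\le j<k_i^c+t_i$ for both $c=1,2$, and then leads to the state obtained by setting these positions to $0$ in $bs^1$ and $bs^2$ respectively, with cost $1-t_i$; for $\lambda$, $x_\lambda=1$ leads to $(0^n,0^n)$ with cost $0$ and $x_\lambda=0$ is undefined. The root value is $n$. Decision diagram $D$: a layered directed acyclic multigraph with layers $L_0,\dots,L_{m+1}$; $L_0=\{r\}$ is the root (root state, weight $n$), layer $L_\ell$ for $\ell\le m$ contains one node per state reachable on stage $\ell$ and is associated with the $\ell$-th variable, and $L_{m+1}=\{\mathbf T\}$. Each defined transition gives an arc labeled by the value of the variable ($0$-arc or $1$-arc) with weight equal to the transition cost. An $r$–$\mathbf T$ path encodes the assignment given by its arc labels; its weight is $n$ plus the sum of its arc weights. $\mathrm{Opt}(D)$ is the set of assignments encoded by minimum-weight $r$–$\mathbf T$ paths, and $\mathrm{Opt}(\mathrm{MCSP})$ the set of feasible assignments of minimum objective value. *)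

theory Defs
  imports Main "HOL-Library.Multiset"
begin

(* Strings are lists; s[k:k+t] = take t (drop k s). Positions are 0-based. *)

type_synonym block = "nat \<times> nat \<times> nat"   (* (k1, k2, t) *)

definition substr :: "'a list \<Rightarrow> nat \<Rightarrow> nat \<Rightarrow> 'a list" where
  "substr s i j = take (j - i) (drop i s)"

definition related :: "'a list \<Rightarrow> 'a list \<Rightarrow> bool" where
  "related s1 s2 \<longleftrightarrow> length s1 = length s2 \<and> mset s1 = mset s2"

definition is_block :: "'a list \<Rightarrow> 'a list \<Rightarrow> block \<Rightarrow> bool" where
  "is_block s1 s2 b = (case b of (k1, k2, t) \<Rightarrow>
     1 \<le> t \<and> t \<le> length s1 \<and> k1 \<le> length s1 - t \<and> k2 \<le> length s1 - t \<and>
     substr s1 k1 (k1 + t) = substr s2 k2 (k2 + t))"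

definition blocks2 :: "'a list \<Rightarrow> 'a list \<Rightarrow> block set" where
  "blocks2 s1 s2 = {b. is_block s1 s2 b \<and> 2 \<le> snd (snd b)}"

definition overlap :: "block \<Rightarrow> block \<Rightarrow> bool" where
  "overlap bi bj = (case bi of (ki1, ki2, ti) \<Rightarrow> case bj of (kj1, kj2, tj) \<Rightarrow>
     (int ki1 - int tj < int kj1 \<and> int kj1 < int ki1 + int ti) \<or>
     (int ki2 - int tj < int kj2 \<and> int kj2 < int ki2 + int ti))"

(* An assignment x \<in> {0,1}^(I \<union> {\<lambda>}) for the block order bl (I = {0..<length bl},
   index i standing for the block bl!i) is a bool list of length (length bl + 1);
   its last entry (index length bl) is x_\<lambda>. *)
definition mcsp_feasible :: "block list \<Rightarrow> bool list \<Rightarrow> bool" where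
  "mcsp_feasible bl x \<longleftrightarrow> length x = length bl + 1 \<and> x ! length bl \<and>
     (\<forall>i < length bl. \<forall>j < length bl. i \<noteq> j \<and> x ! i \<and> x ! j \<longrightarrow> \<not> overlap (bl ! i) (bl ! j))"

definition mcsp_obj :: "nat \<Rightarrow> block list \<Rightarrow> bool list \<Rightarrow> int" where
  "mcsp_obj n bl x = int n + (\<Sum>i \<in> {i. i < length bl \<and> x ! i}. 1 - int (snd (snd (bl ! i))))"

definition Opt_MCSP :: "nat \<Rightarrow> block list \<Rightarrow> bool list set" where
  "Opt_MCSP n bl = {x. mcsp_feasible bl x \<and>
     (\<forall>y. mcsp_feasible bl y \<longrightarrow> mcsp_obj n bl x \<le> mcsp_obj n bl y)}"

definition common_partition :: "'a list \<Rightarrow> 'a list \<Rightarrow> 'a list list \<Rightarrow> 'a list list \<Rightarrow> bool" where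
  "common_partition s1 s2 P1 P2 \<longleftrightarrow> concat P1 = s1 \<and> concat P2 = s2 \<and>
     [] \<notin> set P1 \<and> [] \<notin> set P2 \<and> mset P1 = mset P2"

definition assignment_parts :: "'a list \<Rightarrow> block list \<Rightarrow> bool list \<Rightarrow> 'a list multiset" where
  "assignment_parts s1 bl x =
     mset (map (\<lambda>i. case bl ! i of (k1, k2, t) \<Rightarrow> substr s1 k1 (k1 + t))
               (filter (\<lambda>i. x ! i) [0..<length bl]))
   + mset (map (\<lambda>j. [s1 ! j])
               (filter (\<lambda>j. \<not> (\<exists>i < length bl. x ! i \<and>
                              fst (bl ! i) \<le> j \<and> j < fst (bl ! i) + snd (snd (bl ! i))))
                       [0..<length s1]))"

type_synonym state = "bool list \<times> bool list"

definition root_state :: "nat \<Rightarrow> state" where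
  "root_state n = (replicate n True, replicate n True)"

definition clear :: "nat \<Rightarrow> nat \<Rightarrow> bool list \<Rightarrow> bool list" where
  "clear k t bs = map (\<lambda>j. if k \<le> j \<and> j < k + t then False else bs ! j) [0..<length bs]"

(* transition on a block variable x_i with value v; None = undefined; result (new state, cost) *)
definition block_trans :: "block \<Rightarrow> state \<Rightarrow> bool \<Rightarrow> (state \<times> int) option" where
  "block_trans b st v = (case b of (k1, k2, t) \<Rightarrow> case st of (bs1, bs2) \<Rightarrow>
     if \<not> v then Some ((bs1, bs2), 0)
     else if (\<forall>j. k1 \<le> j \<and> j < k1 + t \<longrightarrow> j < length bs1 \<and> bs1 ! j) \<and>
             (\<forall>j. k2 \<le> j \<and> j < k2 + t \<longrightarrow> j < length bs2 \<and> bs2 ! j)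
     then Some ((clear k1 t bs1, clear k2 t bs2), 1 - int t)
     else None)"

definition lambda_trans :: "nat \<Rightarrow> state \<Rightarrow> bool \<Rightarrow> (state \<times> int) option" where
  "lambda_trans n st v = (if v then Some ((replicate n False, replicate n False), 0) else None)"

fun reach :: "nat \<Rightarrow> block list \<Rightarrow> nat \<Rightarrow> state set" where
  "reach n bl 0 = {root_state n}"
| "reach n bl (Suc l) =
     {st'. \<exists>st \<in> reach n bl l. \<exists>v c. block_trans (bl ! l) st v = Some (st', c)}"

datatype dd_node = Nd nat state | Term

type_synonym dd_arc = "dd_node \<times> bool \<times> int \<times> dd_node"  (* source, label, weight, target *)

definition dd_root :: "nat \<Rightarrow> dd_node" where
  "dd_root n = Nd 0 (root_state n)"

definition dd_arcs :: "nat \<Rightarrow> block list \<Rightarrow> dd_arc set" where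
  "dd_arcs n bl =
     {(Nd l st, v, c, Nd (Suc l) st') | l st v c st'.
        l < length bl \<and> st \<in> reach n bl l \<and> block_trans (bl ! l) st v = Some (st', c)}
   \<union> {(Nd (length bl) st, v, c, Term) | st v c st'.
        st \<in> reach n bl (length bl) \<and> lambda_trans n st v = Some (st', c)}"

definition arc_src :: "dd_arc \<Rightarrow> dd_node" where "arc_src a = fst a"
definition arc_label :: "dd_arc \<Rightarrow> bool" where "arc_label a = fst (snd a)"
definition arc_weight :: "dd_arc \<Rightarrow> int" where "arc_weight a = fst (snd (snd a))"
definition arc_tgt :: "dd_arc \<Rightarrow> dd_node" where "arc_tgt a = snd (snd (snd a))"

definition rT_path :: "nat \<Rightarrow> block list \<Rightarrow> dd_arc list \<Rightarrow> bool" where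
  "rT_path n bl p \<longleftrightarrow> p \<noteq> [] \<and> set p \<subseteq> dd_arcs n bl \<and>
     arc_src (hd p) = dd_root n \<and> arc_tgt (last p) = Term \<and>
     (\<forall>i. Suc i < length p \<longrightarrow> arc_tgt (p ! i) = arc_src (p ! Suc i))"

definition path_assignment :: "dd_arc list \<Rightarrow> bool list" where
  "path_assignment p = map arc_label p"

definition path_weight :: "nat \<Rightarrow> dd_arc list \<Rightarrow> int" where
  "path_weight n p = int n + sum_list (map arc_weight p)"

definition Opt_D :: "nat \<Rightarrow> block list \<Rightarrow> bool list set" where
  "Opt_D n bl = {path_assignment p | p. rT_path n bl p \<and>
     (\<forall>q. rT_path n bl q \<longrightarrow> path_weight n p \<le> path_weight n q)}"

end

theory Submission
  imports Defs "HOL-Combinatorics.Permutations"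
begin


definition tt :: "block \<Rightarrow> nat" where "tt b = snd (snd b)"
definition kk2 :: "block \<Rightarrow> nat" where "kk2 b = fst (snd b)"

definition cov :: "(block \<Rightarrow> nat) \<Rightarrow> block list \<Rightarrow> bool list \<Rightarrow> nat \<Rightarrow> nat \<Rightarrow> bool" where
  "cov f bl x l j = (\<exists>i<l. x ! i \<and> f (bl ! i) \<le> j \<and> j < f (bl ! i) + tt (bl ! i))"

definition SS :: "nat \<Rightarrow> block list \<Rightarrow> bool list \<Rightarrow> nat \<Rightarrow> state" where
  "SS n bl x l = (map (\<lambda>j. \<not> cov fst bl x l j) [0..<n], map (\<lambda>j. \<not> cov kk2 bl x l j) [0..<n])"

definition cst :: "block list \<Rightarrow> bool list \<Rightarrow> nat \<Rightarrow> int" where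
  "cst bl x l = (if x ! l then 1 - int (tt (bl ! l)) else 0)"

definition pf :: "block list \<Rightarrow> bool list \<Rightarrow> nat \<Rightarrow> bool" where
  "pf bl x l = (\<forall>i<l. \<forall>j<l. i \<noteq> j \<and> x ! i \<and> x ! j \<longrightarrow> \<not> overlap (bl ! i) (bl ! j))"

definition inrange :: "nat \<Rightarrow> block list \<Rightarrow> bool" where
  "inrange n bl = (\<forall>b\<in>set bl. 1 \<le> tt b \<and> fst b + tt b \<le> n \<and> kk2 b + tt b \<le> n)"

lemma overlap_sym: "overlap a b = overlap b a"
  unfolding overlap_def by (auto split: prod.splits)

lemma not_overlap_iff: "\<not> overlap a b \<longleftrightarrow>
   (fst a + tt a \<le> fst b \<or> fst b + tt b \<le> fst a) \<and> (kk2 a + tt a \<le> kk2 b \<or> kk2 b + tt b \<le> kk2 a)"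
  unfolding overlap_def tt_def kk2_def by (auto split: prod.splits)

lemma inter_iff:
  assumes "1 \<le> (ta::nat)" "1 \<le> tb"
  shows "(\<exists>j. a \<le> j \<and> j < a + ta \<and> b \<le> j \<and> j < b + tb) \<longleftrightarrow> \<not> (a + ta \<le> b \<or> b + tb \<le> a)"
proof
  assume "\<not> (a + ta \<le> b \<or> b + tb \<le> a)"
  then show "\<exists>j. a \<le> j \<and> j < a + ta \<and> b \<le> j \<and> j < b + tb"
    using assms by (intro exI[of _ "max a b"]) auto
qed auto

lemma overlap_iff:
  assumes "1 \<le> tt a" "1 \<le> tt b"
  shows "overlap a b \<longleftrightarrow> (\<exists>j. fst a \<le> j \<and> j < fst a + tt a \<and> fst b \<le> j \<and> j < fst b + tt b)
     \<or> (\<exists>j. kk2 a \<le> j \<and> j < kk2 a + tt a \<and> kk2 b \<le> j \<and> j < kk2 b + tt b)"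
  using not_overlap_iff[of a b] inter_iff[OF assms, of "fst a" "fst b"] inter_iff[OF assms, of "kk2 a" "kk2 b"]
  by blast

lemma SS0: "SS n bl x 0 = root_state n"
  unfolding SS_def root_state_def cov_def by (simp add: map_replicate_const)

lemma cov_Suc: "cov f bl x (Suc l) j = (cov f bl x l j \<or> (x ! l \<and> f (bl ! l) \<le> j \<and> j < f (bl ! l) + tt (bl ! l)))"
  unfolding cov_def by (auto simp: less_Suc_eq)

lemma trans_lemma:
  assumes rng: "inrange n bl" and l: "l < length bl"
  shows "block_trans (bl ! l) (SS n bl x l) (x ! l) =
    (if x ! l \<and> (\<exists>i<l. x ! i \<and> overlap (bl ! i) (bl ! l)) then None
     else Some (SS n bl x (Suc l), cst bl x l))"
proof -
  obtain a1 a2 t where b: "bl ! l = (a1, a2, t)" by (cases "bl ! l") auto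
  have bin: "bl ! l \<in> set bl" using l by simp
  then have r: "1 \<le> t" "a1 + t \<le> n" "a2 + t \<le> n" using rng b unfolding inrange_def tt_def kk2_def by force+
  show ?thesis
  proof (cases "x ! l")
    case False
    then have "SS n bl x (Suc l) = SS n bl x l" unfolding SS_def by (simp add: cov_Suc)
    then show ?thesis using False b unfolding block_trans_def cst_def by simp
  next
    case True
    have ex: "(\<exists>i<l. x ! i \<and> overlap (bl ! i) (bl ! l)) \<longleftrightarrow>
       (\<exists>j. a1 \<le> j \<and> j < a1 + t \<and> cov fst bl x l j) \<or> (\<exists>j. a2 \<le> j \<and> j < a2 + t \<and> cov kk2 bl x l j)"
    proof -
      have "\<And>i. i < l \<Longrightarrow> overlap (bl ! i) (bl ! l) \<longleftrightarrow>
         (\<exists>j. fst (bl!i) \<le> j \<and> j < fst (bl!i) + tt (bl!i) \<and> a1 \<le> j \<and> j < a1 + t)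
       \<or> (\<exists>j. kk2 (bl!i) \<le> j \<and> j < kk2 (bl!i) + tt (bl!i) \<and> a2 \<le> j \<and> j < a2 + t)"
      proof -
        fix i assume "i < l"
        then have "bl ! i \<in> set bl" using l by simp
        then have "1 \<le> tt (bl ! i)" using rng unfolding inrange_def by auto
        from overlap_iff[OF this, of "bl ! l"] r b show "?thesis i" by (simp add: tt_def kk2_def)
      qed
      then show ?thesis unfolding cov_def by blast
    qed
    have c1: "(\<forall>j. a1 \<le> j \<and> j < a1 + t \<longrightarrow> j < length (fst (SS n bl x l)) \<and> fst (SS n bl x l) ! j)
       \<longleftrightarrow> \<not> (\<exists>j. a1 \<le> j \<and> j < a1 + t \<and> cov fst bl x l j)"
      using r unfolding SS_def by auto
    have c2: "(\<forall>j. a2 \<le> j \<and> j < a2 + t \<longrightarrow> j < length (snd (SS n bl x l)) \<and> snd (SS n bl x l) ! j)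
       \<longleftrightarrow> \<not> (\<exists>j. a2 \<le> j \<and> j < a2 + t \<and> cov kk2 bl x l j)"
      using r unfolding SS_def by auto
    have cl1: "clear a1 t (fst (SS n bl x l)) = fst (SS n bl x (Suc l))"
      unfolding SS_def clear_def using True b by (auto simp: cov_Suc tt_def)
    have cl2: "clear a2 t (snd (SS n bl x l)) = snd (SS n bl x (Suc l))"
      unfolding SS_def clear_def using True b by (auto simp: cov_Suc tt_def kk2_def)
    show ?thesis
      using True b c1 c2 cl1 cl2 ex unfolding block_trans_def cst_def
      by (cases "SS n bl x l") (simp add: tt_def)
  qed
qed




lemma dd_arcsI1: "l < length bl \<Longrightarrow> st \<in> reach n bl l \<Longrightarrow> block_trans (bl ! l) st v = Some (st', c)
   \<Longrightarrow> (Nd l st, v, c, Nd (Suc l) st') \<in> dd_arcs n bl"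
  unfolding dd_arcs_def by blast

lemma dd_arcsI2: "st \<in> reach n bl (length bl) \<Longrightarrow> (Nd (length bl) st, True, 0, Term) \<in> dd_arcs n bl"
  unfolding dd_arcs_def lambda_trans_def by (cases st) (auto intro!: exI[of _ True])
lemma lt_Some: "lambda_trans n st v = Some (st', c) \<Longrightarrow> v \<and> c = 0" by (simp add: lambda_trans_def split: if_splits)
lemma dd_arcsE:
  assumes "a \<in> dd_arcs n bl"
  obtains (A) l st v c st' where "a = (Nd l st, v, c, Nd (Suc l) st')" "l < length bl" "st \<in> reach n bl l"
     "block_trans (bl ! l) st v = Some (st', c)"
  | (B) st where "a = (Nd (length bl) st, True, 0, Term)"
  using assms unfolding dd_arcs_def by (auto dest: lt_Some)
lemma pf_Suc:
  assumes "pf bl x l" "\<not> (x ! l \<and> (\<exists>i<l. x ! i \<and> overlap (bl ! i) (bl ! l)))"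
  shows "pf bl x (Suc l)"
  using assms unfolding pf_def by (auto simp: less_Suc_eq overlap_sym)

lemma pf_nooverlap: "pf bl x (Suc l) \<Longrightarrow> \<not> (x ! l \<and> (\<exists>i<l. x ! i \<and> overlap (bl ! i) (bl ! l)))"
  unfolding pf_def by auto

lemma pf_mono: "pf bl x l \<Longrightarrow> l' \<le> l \<Longrightarrow> pf bl x l'"
  unfolding pf_def by auto

definition canon :: "nat \<Rightarrow> block list \<Rightarrow> bool list \<Rightarrow> dd_arc list" where
  "canon n bl x = map (\<lambda>l. (Nd l (SS n bl x l), x ! l, cst bl x l, Nd (Suc l) (SS n bl x (Suc l)))) [0..<length bl]
     @ [(Nd (length bl) (SS n bl x (length bl)), True, 0, Term)]"

lemma SS_reach:
  assumes "inrange n bl" "pf bl x l" "l \<le> length bl"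
  shows "SS n bl x l \<in> reach n bl l"
  using assms(2,3)
proof (induction l)
  case 0 then show ?case by (simp add: SS0)
next
  case (Suc l)
  have "pf bl x l" using Suc.prems pf_mono by auto
  then have "SS n bl x l \<in> reach n bl l" using Suc by auto
  moreover have "block_trans (bl ! l) (SS n bl x l) (x ! l) = Some (SS n bl x (Suc l), cst bl x l)"
    using trans_lemma[OF assms(1), of l x] Suc.prems pf_nooverlap by auto
  ultimately show ?case by auto
qed

lemma feasible_pf: "mcsp_feasible bl x \<longleftrightarrow> length x = length bl + 1 \<and> x ! length bl \<and> pf bl x (length bl)"
  unfolding mcsp_feasible_def pf_def by auto

lemma canon_weight:
  "path_weight n (canon n bl x) = mcsp_obj n bl x"
proof -
  have "sum_list (map arc_weight (canon n bl x)) = (\<Sum>l\<in>{0..<length bl}. cst bl x l)"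
    unfolding canon_def by (simp add: arc_weight_def comp_def flip: sum_set_upt_conv_sum_list_nat)
  also have "\<dots> = (\<Sum>i \<in> {i. i < length bl \<and> x ! i}. 1 - int (snd (snd (bl ! i))))"
  proof -
    have e: "{i. i < length bl \<and> x ! i} = {i \<in> {0..<length bl}. x ! i}" by auto
    have "(\<Sum>i\<in>{i \<in> {0..<length bl}. x ! i}. 1 - int (tt (bl!i))) = (\<Sum>l\<in>{0..<length bl}. cst bl x l)"
      unfolding cst_def by (rule sum.inter_filter) simp
    then show ?thesis unfolding e tt_def by simp
  qed
  finally show ?thesis unfolding path_weight_def mcsp_obj_def by simp
qed

lemma canon_path:
  assumes rng: "inrange n bl" and f: "mcsp_feasible bl x"
  shows "rT_path n bl (canon n bl x)" "path_assignment (canon n bl x) = x"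
proof -
  let ?m = "length bl"
  have lx: "length x = ?m + 1" and xm: "x ! ?m" and pfm: "pf bl x ?m" using f feasible_pf by auto
  have arcs: "set (canon n bl x) \<subseteq> dd_arcs n bl"
  proof
    fix a assume "a \<in> set (canon n bl x)"
    then consider l where "l < ?m" "a = (Nd l (SS n bl x l), x ! l, cst bl x l, Nd (Suc l) (SS n bl x (Suc l)))"
      | "a = (Nd ?m (SS n bl x ?m), True, 0, Term)"
      unfolding canon_def by auto
    then show "a \<in> dd_arcs n bl"
    proof cases
      case 1
      have p: "pf bl x (Suc l)" using pfm pf_mono 1 by auto
      then have "pf bl x l" using pf_mono by auto
      then have "SS n bl x l \<in> reach n bl l" using SS_reach[OF rng] 1 by auto
      moreover have "block_trans (bl ! l) (SS n bl x l) (x ! l) = Some (SS n bl x (Suc l), cst bl x l)"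
        using trans_lemma[OF rng, of l x] 1 pf_nooverlap[OF p] by auto
      ultimately show ?thesis using 1 dd_arcsI1 by simp
    next
      case 2
      have "SS n bl x ?m \<in> reach n bl ?m" using SS_reach[OF rng pfm] by auto
      then show ?thesis using 2 dd_arcsI2 by simp
    qed
  qed
  have len: "length (canon n bl x) = Suc ?m" unfolding canon_def by simp
  have nth: "\<And>i. i < ?m \<Longrightarrow> canon n bl x ! i = (Nd i (SS n bl x i), x ! i, cst bl x i, Nd (Suc i) (SS n bl x (Suc i)))"
    unfolding canon_def by (simp add: nth_append)
  have nthm: "canon n bl x ! ?m = (Nd ?m (SS n bl x ?m), True, 0, Term)"
    unfolding canon_def by (simp add: nth_append)
  have ne: "canon n bl x \<noteq> []" unfolding canon_def by simp
  have "hd (canon n bl x) = canon n bl x ! 0" using hd_conv_nth[OF ne] .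
  then have hd: "arc_src (hd (canon n bl x)) = dd_root n"
    using nth[of 0] nthm by (cases "?m = 0") (auto simp: SS0 dd_root_def arc_src_def)
  have last: "arc_tgt (last (canon n bl x)) = Term" unfolding canon_def arc_tgt_def by simp
  have cons: "\<forall>i. Suc i < length (canon n bl x) \<longrightarrow> arc_tgt (canon n bl x ! i) = arc_src (canon n bl x ! Suc i)"
  proof (intro allI impI)
    fix i assume "Suc i < length (canon n bl x)"
    then have "i < ?m" using len by auto
    then show "arc_tgt (canon n bl x ! i) = arc_src (canon n bl x ! Suc i)"
      using nth nthm by (cases "Suc i = ?m") (auto simp: arc_tgt_def arc_src_def)
  qed
  show "rT_path n bl (canon n bl x)" unfolding rT_path_def
    using arcs hd last cons len by auto
  show "path_assignment (canon n bl x) = x"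
  proof (rule nth_equalityI)
    show "length (path_assignment (canon n bl x)) = length x" using len lx by (simp add: path_assignment_def)
    fix i assume "i < length (path_assignment (canon n bl x))"
    then have "i < Suc ?m" using len by (simp add: path_assignment_def)
    then have "path_assignment (canon n bl x) ! i = arc_label (canon n bl x ! i)"
      using len by (simp add: path_assignment_def)
    then show "path_assignment (canon n bl x) ! i = x ! i"
      using nth nthm xm \<open>i < Suc ?m\<close> by (cases "i = ?m") (auto simp: path_assignment_def arc_label_def)
  qed
qed

lemma path_canon:
  assumes rng: "inrange n bl" and p: "rT_path n bl p"
  shows "mcsp_feasible bl (path_assignment p) \<and> p = canon n bl (path_assignment p)"
proof -
  let ?m = "length bl"
  define x where "x = path_assignment p"
  have xi: "\<And>i. i < length p \<Longrightarrow> x ! i = arc_label (p ! i)" unfolding x_def path_assignment_def by simp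
  have pne: "p \<noteq> []" and arcs: "set p \<subseteq> dd_arcs n bl" and hd: "arc_src (hd p) = dd_root n"
    and lst: "arc_tgt (last p) = Term"
    and cons: "\<And>i. Suc i < length p \<Longrightarrow> arc_tgt (p ! i) = arc_src (p ! Suc i)"
    using p unfolding rT_path_def by auto
  have main: "l \<le> ?m \<Longrightarrow> l < length p \<and> arc_src (p ! l) = Nd l (SS n bl x l) \<and> pf bl x l \<and>
     (\<forall>i<l. p ! i = (Nd i (SS n bl x i), x ! i, cst bl x i, Nd (Suc i) (SS n bl x (Suc i))))" for l
  proof (induction l)
    case 0
    then show ?case using pne hd by (simp add: hd_conv_nth SS0 dd_root_def pf_def)
  next
    case (Suc l)
    then have l: "l < length p" and src: "arc_src (p ! l) = Nd l (SS n bl x l)" and pfl: "pf bl x l"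
      and prev: "\<forall>i<l. p ! i = (Nd i (SS n bl x i), x ! i, cst bl x i, Nd (Suc i) (SS n bl x (Suc i)))"
      by auto
    have lm: "l < ?m" using Suc by auto
    have "p ! l \<in> dd_arcs n bl" using arcs l by auto
    then obtain v c st' where pl: "p ! l = (Nd l (SS n bl x l), v, c, Nd (Suc l) st')"
      and bt: "block_trans (bl ! l) (SS n bl x l) v = Some (st', c)"
      using src lm by (cases rule: dd_arcsE) (auto simp: arc_src_def)
    have v: "v = x ! l" using xi[OF l] pl by (simp add: arc_label_def)
    have tr: "block_trans (bl ! l) (SS n bl x l) (x ! l) =
    (if x ! l \<and> (\<exists>i<l. x ! i \<and> overlap (bl ! i) (bl ! l)) then None
     else Some (SS n bl x (Suc l), cst bl x l))" using trans_lemma[OF rng lm] .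
    have no: "\<not> (x ! l \<and> (\<exists>i<l. x ! i \<and> overlap (bl ! i) (bl ! l)))" using tr bt v by (auto split: if_splits)
    have st': "st' = SS n bl x (Suc l)" "c = cst bl x l" using tr bt v no by auto
    have "Suc l < length p"
    proof (rule ccontr)
      assume "\<not> Suc l < length p"
      then have "l = length p - 1" using l by simp
      then have "last p = p ! l" using pne by (simp add: last_conv_nth)
      then show False using lst pl by (simp add: arc_tgt_def)
    qed
    moreover have "arc_src (p ! Suc l) = Nd (Suc l) (SS n bl x (Suc l))"
      using cons[OF calculation] pl st' by (simp add: arc_tgt_def)
    moreover have "pf bl x (Suc l)" using pf_Suc[OF pfl no] .
    moreover have "\<forall>i<Suc l. p ! i = (Nd i (SS n bl x i), x ! i, cst bl x i, Nd (Suc i) (SS n bl x (Suc i)))"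
      using prev pl v st' by (auto simp: less_Suc_eq)
    ultimately show ?case by blast
  qed
  from main[of ?m] have lm: "?m < length p" and srcm: "arc_src (p ! ?m) = Nd ?m (SS n bl x ?m)"
    and pfm: "pf bl x ?m"
    and prev: "\<forall>i<?m. p ! i = (Nd i (SS n bl x i), x ! i, cst bl x i, Nd (Suc i) (SS n bl x (Suc i)))" by auto
  have "p ! ?m \<in> dd_arcs n bl" using arcs lm by auto
  then obtain v c where pm: "p ! ?m = (Nd ?m (SS n bl x ?m), v, c, Term)" and vc: "v = True" "c = 0"
    using srcm by (cases rule: dd_arcsE) (auto simp: arc_src_def)
  have lp: "length p = Suc ?m"
  proof (rule ccontr)
    assume "length p \<noteq> Suc ?m"
    then have "Suc ?m < length p" using lm by auto
    from cons[OF this] have "arc_src (p ! Suc ?m) = Term" using pm by (simp add: arc_tgt_def)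
    moreover have "p ! Suc ?m \<in> dd_arcs n bl" using arcs \<open>Suc ?m < length p\<close> by auto
    ultimately show False by (metis (no_types, lifting) dd_arcsE arc_src_def dd_node.distinct(1) fst_conv)
  qed
  have lx: "length x = ?m + 1" using lp by (simp add: x_def path_assignment_def)
  have xm: "x ! ?m" using xi[OF lm] pm vc by (simp add: arc_label_def)
  have feas: "mcsp_feasible bl x" using feasible_pf lx xm pfm by auto
  have "p = canon n bl x"
  proof (rule nth_equalityI)
    show "length p = length (canon n bl x)" using lp by (simp add: canon_def)
    fix i assume "i < length p"
    then show "p ! i = canon n bl x ! i"
      using prev pm vc lp by (cases "i = ?m") (auto simp: canon_def nth_append)
  qed
  then show ?thesis using feas x_def by simp
qed




definition disj :: "nat \<times> nat \<Rightarrow> nat \<times> nat \<Rightarrow> bool" where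
  "disj u v = (fst u + snd u \<le> fst v \<or> fst v + snd v \<le> fst u)"
definition seg :: "'a list \<Rightarrow> nat \<times> nat \<Rightarrow> 'a list" where "seg s u = take (snd u) (drop (fst u) s)"
definition unc :: "(nat \<times> nat) list \<Rightarrow> nat \<Rightarrow> bool" where
  "unc I j = (\<not> (\<exists>u\<in>set I. fst u \<le> j \<and> j < fst u + snd u))"

lemma seg_take: "fst u + snd u \<le> K \<Longrightarrow> seg (take K s) u = seg s u"
  unfolding seg_def by (simp add: drop_take min_def)

lemma gen_part:
  "distinct I \<Longrightarrow> \<forall>u\<in>set I. 1 \<le> snd u \<and> fst u + snd u \<le> length s \<Longrightarrow>
   \<forall>u\<in>set I. \<forall>v\<in>set I. u \<noteq> v \<longrightarrow> disj u v \<Longrightarrow>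
   \<exists>P. concat P = s \<and> [] \<notin> set P \<and>
     mset P = mset (map (seg s) I) + mset (map (\<lambda>j. [s ! j]) (filter (unc I) [0..<length s]))"
proof (induction "length s" arbitrary: s I rule: less_induct)
  case less
  show ?case
  proof (cases "length s")
    case 0
    then have "I = []" using less.prems(2) by (cases I) auto
    then show ?thesis using 0 by (intro exI[of _ "[]"]) simp
  next
    case (Suc n')
    show ?thesis
    proof (cases "unc I n'")
      case True
      define s' where "s' = take n' s"
      have ls': "length s' = n'" using Suc s'_def by simp
      have rng: "\<forall>u\<in>set I. 1 \<le> snd u \<and> fst u + snd u \<le> length s'"
      proof
        fix u assume u: "u \<in> set I"
        then have "1 \<le> snd u" "fst u + snd u \<le> Suc n'" using less.prems(2) Suc by auto
        moreover have "\<not> (fst u \<le> n' \<and> n' < fst u + snd u)" using True u unfolding unc_def by auto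
        ultimately show "1 \<le> snd u \<and> fst u + snd u \<le> length s'" using ls' by auto
      qed
      obtain P' where P': "concat P' = s'" "[] \<notin> set P'"
        "mset P' = mset (map (seg s') I) + mset (map (\<lambda>j. [s' ! j]) (filter (unc I) [0..<length s']))"
        using less.hyps[of s' I] ls' Suc less.prems(1,3) rng by auto
      have segeq: "map (seg s') I = map (seg s) I"
        proof (rule map_cong[OF refl])
        fix u assume "u \<in> set I"
        then have "fst u + snd u \<le> n'" using rng ls' by auto
        then show "seg s' u = seg s u" unfolding s'_def by (rule seg_take)
      qed
      have fe: "map (\<lambda>j. [s' ! j]) (filter (unc I) [0..<length s']) = map (\<lambda>j. [s ! j]) (filter (unc I) [0..<n'])"
        using ls' unfolding s'_def by (auto intro!: map_cong)
      have "concat (P' @ [[s ! n']]) = s" using P'(1) Suc unfolding s'_def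
        by (simp add: take_Suc_conv_app_nth[symmetric])
      moreover have "mset (P' @ [[s ! n']]) = mset (map (seg s) I) + mset (map (\<lambda>j. [s ! j]) (filter (unc I) [0..<length s]))"
        using P'(3) segeq fe True Suc by simp
      ultimately show ?thesis using P'(2) by (intro exI[of _ "P' @ [[s ! n']]"]) auto
    next
      case False
      then obtain k t where kt: "(k, t) \<in> set I" "k \<le> n'" "n' < k + t" unfolding unc_def by auto
      have t1: "1 \<le> t" and kts: "k + t \<le> Suc n'" using less.prems(2) kt(1) Suc by auto
      have ktn: "k + t = Suc n'" using kts kt by auto
      define I' where "I' = remove1 (k, t) I"
      have sI': "set I' = set I - {(k, t)}" unfolding I'_def using less.prems(1) by simp
      define s' where "s' = take k s"
      have ls': "length s' = k" using Suc ktn s'_def by simp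
      have rng: "\<forall>u\<in>set I'. 1 \<le> snd u \<and> fst u + snd u \<le> k"
      proof
        fix u assume u: "u \<in> set I'"
        then have uI: "u \<in> set I" "u \<noteq> (k, t)" using sI' by auto
        then have "1 \<le> snd u" "fst u + snd u \<le> Suc n'" using less.prems(2) Suc by auto
        moreover have "disj u (k, t)" using less.prems(3) uI kt(1) by auto
        ultimately show "1 \<le> snd u \<and> fst u + snd u \<le> k" using ktn unfolding disj_def by auto
      qed
      obtain P' where P': "concat P' = s'" "[] \<notin> set P'"
        "mset P' = mset (map (seg s') I') + mset (map (\<lambda>j. [s' ! j]) (filter (unc I') [0..<length s']))"
        using less.hyps[of s' I'] ls' Suc ktn t1 less.prems(1,3) rng sI' unfolding I'_def
        by (auto simp: distinct_remove1)
      have segeq: "map (seg s') I' = map (seg s) I'"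
        proof (rule map_cong[OF refl])
        fix u assume "u \<in> set I'"
        then have "fst u + snd u \<le> k" using rng by auto
        then show "seg s' u = seg s u" unfolding s'_def by (rule seg_take)
      qed
      have msI: "mset (map (seg s) I) = mset (map (seg s) I') + {# seg s (k, t) #}"
      proof -
        have "mset I = add_mset (k, t) (mset I')" unfolding I'_def using kt(1) by (simp add: insert_DiffM)
        then show ?thesis by simp
      qed
      have segkt: "seg s (k, t) = drop k s" using ktn Suc unfolding seg_def by simp
      have sI: "set I = insert (k, t) (set I')" using sI' kt(1) by auto
      have uncI: "\<And>j. j < k \<Longrightarrow> unc I j = unc I' j"
        unfolding unc_def sI by simp
      have up: "[0..<length s] = [0..<k] @ [k..<length s]" using ktn Suc
        by (metis le_add1 le_add_same_cancel1 upt_add_eq_append zero_le)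
      have f2: "filter (unc I) [k..<length s] = []"
        using kt(1) ktn Suc unfolding unc_def by (auto simp: filter_empty_conv intro!: bexI[OF _ kt(1)])
      have fe: "map (\<lambda>j. [s' ! j]) (filter (unc I') [0..<length s']) = map (\<lambda>j. [s ! j]) (filter (unc I) [0..<length s])"
      proof -
        have "filter (unc I') [0..<k] = filter (unc I) [0..<k]" using uncI by (auto intro!: filter_cong)
        then show ?thesis using ls' up f2 unfolding s'_def by (auto intro!: map_cong)
      qed
      have "concat (P' @ [drop k s]) = s" using P'(1) unfolding s'_def by simp
      moreover have "drop k s \<noteq> []" using ktn t1 Suc by simp
      moreover have "mset (P' @ [drop k s]) = mset (map (seg s) I) + mset (map (\<lambda>j. [s ! j]) (filter (unc I) [0..<length s]))"
        using P'(3) segeq fe msI segkt by simp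
      ultimately show ?thesis using P'(2) by (intro exI[of _ "P' @ [drop k s]"]) auto
    qed
  qed
qed



lemma mset_concat_sum: "mset (concat P) = \<Sum>\<^sub># (image_mset mset (mset P))" by (induction P) auto
lemma len_concat_sum: "length (concat P) = \<Sum>\<^sub># (image_mset length (mset P))" by (induction P) auto
lemma sum_single: "\<Sum>\<^sub># (image_mset mset (mset (map (\<lambda>j. [g j]) xs))) = mset (map g xs)" by (induction xs) auto
lemma sum_single_len: "\<Sum>\<^sub># (image_mset length (mset (map (\<lambda>j. [g j]) xs))) = length xs" by (induction xs) auto
lemma single_mset: "mset (map (\<lambda>j. [g j]) xs) = image_mset (\<lambda>c. [c]) (mset (map g xs))" by (induction xs) auto

definition blockok :: "'a list \<Rightarrow> 'a list \<Rightarrow> block list \<Rightarrow> bool" where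
  "blockok s1 s2 bl = (\<forall>b\<in>set bl. 1 \<le> tt b \<and> fst b + tt b \<le> length s1 \<and> kk2 b + tt b \<le> length s1 \<and>
       seg s1 (fst b, tt b) = seg s2 (kk2 b, tt b))"

lemma blockok_of:
  assumes "set bl = blocks2 s1 s2"
  shows "blockok s1 s2 bl"
  unfolding blockok_def
proof
  fix b assume "b \<in> set bl"
  then have "is_block s1 s2 b" "2 \<le> tt b" using assms unfolding blocks2_def tt_def by auto
  then show "1 \<le> tt b \<and> fst b + tt b \<le> length s1 \<and> kk2 b + tt b \<le> length s1 \<and>
       seg s1 (fst b, tt b) = seg s2 (kk2 b, tt b)"
    unfolding is_block_def tt_def kk2_def seg_def substr_def by (auto split: prod.splits)
qed

lemma part3:
  assumes l1: "length s1 = n" and l2: "length s2 = n" and ms: "mset s1 = mset s2"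
    and ok: "blockok s1 s2 bl" and f: "mcsp_feasible bl x"
  shows "\<exists>P1 P2. common_partition s1 s2 P1 P2 \<and> mset P1 = assignment_parts s1 bl x
                   \<and> int (length P1) = mcsp_obj n bl x"
proof -
  let ?m = "length bl"
  define C where "C = filter (\<lambda>i. x ! i) [0..<?m]"
  define f1 where "f1 i = (fst (bl ! i), tt (bl ! i))" for i
  define f2 where "f2 i = (kk2 (bl ! i), tt (bl ! i))" for i
  define I1 where "I1 = map f1 C"
  define I2 where "I2 = map f2 C"
  have setC: "set C = {i. i < ?m \<and> x ! i}" unfolding C_def by auto
  have dC: "distinct C" unfolding C_def by simp
  have bi: "\<And>i. i \<in> set C \<Longrightarrow> 1 \<le> tt (bl ! i) \<and> fst (bl ! i) + tt (bl ! i) \<le> n \<and> kk2 (bl ! i) + tt (bl ! i) \<le> n \<and>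
       seg s1 (f1 i) = seg s2 (f2 i)"
    using ok l1 setC unfolding blockok_def f1_def f2_def by auto
  have pw: "\<And>i j. i \<in> set C \<Longrightarrow> j \<in> set C \<Longrightarrow> i \<noteq> j \<Longrightarrow> disj (f1 i) (f1 j) \<and> disj (f2 i) (f2 j)"
  proof -
    fix i j assume "i \<in> set C" "j \<in> set C" "i \<noteq> j"
    then have "\<not> overlap (bl ! i) (bl ! j)" using f setC unfolding mcsp_feasible_def by auto
    then show "disj (f1 i) (f1 j) \<and> disj (f2 i) (f2 j)"
      unfolding not_overlap_iff disj_def f1_def f2_def by simp
  qed
  have inj1: "inj_on f1 (set C)"
  proof (rule inj_onI)
    fix i j assume a: "i \<in> set C" "j \<in> set C" "f1 i = f1 j"
    show "i = j"
    proof (rule ccontr)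
      assume "i \<noteq> j"
      then have "disj (f1 i) (f1 j)" using pw[OF a(1,2)] by simp
      moreover have "1 \<le> snd (f1 i)" using bi[OF a(1)] unfolding f1_def by simp
      ultimately show False using a(3) unfolding disj_def by simp
    qed
  qed
  have inj2: "inj_on f2 (set C)"
  proof (rule inj_onI)
    fix i j assume a: "i \<in> set C" "j \<in> set C" "f2 i = f2 j"
    show "i = j"
    proof (rule ccontr)
      assume "i \<noteq> j"
      then have "disj (f2 i) (f2 j)" using pw[OF a(1,2)] by simp
      moreover have "1 \<le> snd (f2 i)" using bi[OF a(1)] unfolding f2_def by simp
      ultimately show False using a(3) unfolding disj_def by simp
    qed
  qed
  have g1: "distinct I1" "\<forall>u\<in>set I1. 1 \<le> snd u \<and> fst u + snd u \<le> length s1"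
     "\<forall>u\<in>set I1. \<forall>v\<in>set I1. u \<noteq> v \<longrightarrow> disj u v"
    unfolding I1_def using dC inj1 bi pw l1 by (auto simp: distinct_map f1_def)
  have g2: "distinct I2" "\<forall>u\<in>set I2. 1 \<le> snd u \<and> fst u + snd u \<le> length s2"
     "\<forall>u\<in>set I2. \<forall>v\<in>set I2. u \<noteq> v \<longrightarrow> disj u v"
    unfolding I2_def using dC inj2 bi pw l2 by (auto simp: distinct_map f2_def)
  obtain P1 where P1: "concat P1 = s1" "[] \<notin> set P1"
     "mset P1 = mset (map (seg s1) I1) + mset (map (\<lambda>j. [s1 ! j]) (filter (unc I1) [0..<length s1]))"
    using gen_part[OF g1] by blast
  obtain P2 where P2: "concat P2 = s2" "[] \<notin> set P2"
     "mset P2 = mset (map (seg s2) I2) + mset (map (\<lambda>j. [s2 ! j]) (filter (unc I2) [0..<length s2]))"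
    using gen_part[OF g2] by blast
  define F1 where "F1 = filter (unc I1) [0..<n]"
  define F2 where "F2 = filter (unc I2) [0..<n]"
  define A where "A = mset (map (seg s1) I1)"
  have A2: "mset (map (seg s2) I2) = A"
    unfolding A_def I1_def I2_def using bi by (simp add: comp_def cong: map_cong)
  have P1': "mset P1 = A + mset (map (\<lambda>j. [s1 ! j]) F1)" using P1(3) unfolding l1 A_def F1_def .
  have P2': "mset P2 = A + mset (map (\<lambda>j. [s2 ! j]) F2)" using P2(3) unfolding l2 A2 F2_def .
  have e1: "mset s1 = \<Sum>\<^sub># (image_mset mset A) + mset (map (\<lambda>j. s1 ! j) F1)"
  proof -
    have "mset s1 = \<Sum>\<^sub># (image_mset mset (mset P1))" using mset_concat_sum[of P1] P1(1) by simp
    also have "\<dots> = \<Sum>\<^sub># (image_mset mset A) + \<Sum>\<^sub># (image_mset mset (mset (map (\<lambda>j. [s1 ! j]) F1)))"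
      unfolding P1' by (simp only: image_mset_union sum_mset.union)
    finally show ?thesis by (simp only: sum_single)
  qed
  have e2: "mset s2 = \<Sum>\<^sub># (image_mset mset A) + mset (map (\<lambda>j. s2 ! j) F2)"
  proof -
    have "mset s2 = \<Sum>\<^sub># (image_mset mset (mset P2))" using mset_concat_sum[of P2] P2(1) by simp
    also have "\<dots> = \<Sum>\<^sub># (image_mset mset A) + \<Sum>\<^sub># (image_mset mset (mset (map (\<lambda>j. [s2 ! j]) F2)))"
      unfolding P2' by (simp only: image_mset_union sum_mset.union)
    finally show ?thesis by (simp only: sum_single)
  qed
  have U: "mset (map (\<lambda>j. s1 ! j) F1) = mset (map (\<lambda>j. s2 ! j) F2)" using e1 e2 ms by simp
  have mP: "mset P1 = mset P2"
    unfolding P1' P2' by (simp only: single_mset U)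
  have cp: "common_partition s1 s2 P1 P2" unfolding common_partition_def using P1 P2 mP by simp
  have unc1: "\<And>j. unc I1 j = (\<not> (\<exists>i < ?m. x ! i \<and> fst (bl ! i) \<le> j \<and> j < fst (bl ! i) + snd (snd (bl ! i))))"
    unfolding unc_def I1_def f1_def tt_def using setC by auto
  have ap: "mset P1 = assignment_parts s1 bl x"
  proof -
    have "map (seg s1) I1 = map (\<lambda>i. case bl ! i of (k1, k2, t) \<Rightarrow> substr s1 k1 (k1 + t)) C"
      unfolding I1_def f1_def seg_def substr_def tt_def by (auto split: prod.splits)
    then show ?thesis using P1(3) unc1 unfolding assignment_parts_def C_def by simp
  qed
  have len: "length P1 = length C + length F1"
  proof -
    have "length P1 = size (mset P1)" by simp
    also have "\<dots> = length C + length F1" unfolding P1' A_def I1_def by simp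
    finally show ?thesis .
  qed
  have nsum: "n = (\<Sum>i\<in>set C. tt (bl ! i)) + length F1"
  proof -
    have "n = \<Sum>\<^sub># (image_mset length (mset P1))" using len_concat_sum[of P1] P1(1) l1 by simp
    also have "\<dots> = \<Sum>\<^sub># (image_mset length A) + length F1"
      unfolding P1' by (simp only: image_mset_union sum_mset.union sum_single_len)
    also have "\<Sum>\<^sub># (image_mset length A) = sum_list (map (\<lambda>i. tt (bl ! i)) C)"
    proof -
      have "\<Sum>\<^sub># (image_mset length A) = sum_list (map (length \<circ> seg s1 \<circ> f1) C)"
        unfolding A_def I1_def by (simp add: sum_mset_sum_list[symmetric] image_mset.compositionality o_assoc)
      also have "map (length \<circ> seg s1 \<circ> f1) C = map (\<lambda>i. tt (bl ! i)) C"
      proof (rule map_cong[OF refl])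
        fix i assume "i \<in> set C"
        then have "fst (bl ! i) + tt (bl ! i) \<le> length s1" using bi l1 by auto
        then show "(length \<circ> seg s1 \<circ> f1) i = tt (bl ! i)" unfolding seg_def f1_def by simp
      qed
      finally show ?thesis .
    qed
    also have "sum_list (map (\<lambda>i. tt (bl ! i)) C) = (\<Sum>i\<in>set C. tt (bl ! i))"
      using dC by (simp add: sum_list_distinct_conv_sum_set)
    finally show ?thesis .
  qed
  have "mcsp_obj n bl x = int n + (\<Sum>i\<in>set C. 1 - int (tt (bl ! i)))"
    unfolding mcsp_obj_def setC tt_def by simp
  also have "\<dots> = int n + int (length C) - (\<Sum>i\<in>set C. int (tt (bl ! i)))"
    using dC by (simp add: sum_subtractf distinct_card)
  also have "\<dots> = int (length P1)" using nsum len by simp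
  finally show ?thesis using cp ap by auto
qed



definition off :: "'a list list \<Rightarrow> nat \<Rightarrow> nat" where
  "off P a = sum_list (map length (take a P))"

lemma off_Suc: "a < length P \<Longrightarrow> off P (Suc a) = off P a + length (P ! a)"
  unfolding off_def by (simp add: take_Suc_conv_app_nth)

lemma off_mono: "a \<le> b \<Longrightarrow> off P a \<le> off P b"
proof -
  assume "a \<le> b"
  then have "take b P = take a P @ drop a (take b P)"
    by (metis append_take_drop_id min.absorb1 take_take)
  then have "off P b = off P a + sum_list (map length (drop a (take b P)))"
    unfolding off_def by (metis map_append sum_list_append)
  then show ?thesis by simp
qed

lemma part_nth:
  assumes "a < length P"
  shows "P ! a = take (length (P ! a)) (drop (off P a) (concat P))"
    "off P a + length (P ! a) \<le> length (concat P)"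
proof -
  have c: "concat P = concat (take a P) @ P ! a @ concat (drop (Suc a) P)"
    using assms by (metis append_take_drop_id concat_append Cons_nth_drop_Suc concat.simps(2))
  have l: "length (concat (take a P)) = off P a" unfolding off_def by (simp add: length_concat)
  show "P ! a = take (length (P ! a)) (drop (off P a) (concat P))"
    using c l by (metis append_eq_conv_conj drop_all order_refl append.right_neutral take_all)
  show "off P a + length (P ! a) \<le> length (concat P)" using c l by (metis le_add1 length_append add.assoc)
qed

lemma disj_parts:
  assumes "a < length P" "b < length P" "a \<noteq> b"
  shows "off P a + length (P ! a) \<le> off P b \<or> off P b + length (P ! b) \<le> off P a"
proof (cases "a < b")
  case True
  then have "off P (Suc a) \<le> off P b" by (intro off_mono) simp
  then show ?thesis using off_Suc[OF assms(1)] by simp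
next
  case False
  then have "b < a" using assms by simp
  then have "off P (Suc b) \<le> off P a" by (intro off_mono) simp
  then show ?thesis using off_Suc[OF assms(2)] by simp
qed

lemma part5:
  assumes l1: "length s1 = n" and l2: "length s2 = n" and db: "distinct bl"
    and sb: "set bl = blocks2 s1 s2" and cp: "common_partition s1 s2 P1 P2"
  shows "\<exists>x. mcsp_feasible bl x \<and> mcsp_obj n bl x = int (length P1)"
proof -
  let ?m = "length bl"
  have c1: "concat P1 = s1" and c2: "concat P2 = s2" and ne1: "[] \<notin> set P1" and ne2: "[] \<notin> set P2"
    and mP: "mset P1 = mset P2" using cp unfolding common_partition_def by auto
  define L where "L = length P1"
  have L2: "length P2 = L" using mset_eq_length[OF mP] L_def by simp
  obtain p where pp: "p permutes {..<length P2}" and pl: "permute_list p P2 = P1"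
    using mset_eq_permutation[OF mP] by blast
  have pn: "\<And>a. a < L \<Longrightarrow> P1 ! a = P2 ! p a" using pl permute_list_nth[OF pp] L2 by metis
  have pL: "\<And>a. a < L \<Longrightarrow> p a < L" using permutes_in_image[OF pp] L2 by auto
  have pinj: "\<And>a b. p a = p b \<Longrightarrow> a = b" using permutes_inj[OF pp] by (auto dest: injD)
  define len where "len a = length (P1 ! a)" for a
  define \<beta> where "\<beta> a = (off P1 a, off P2 (p a), len a)" for a
  define A where "A = {a. a < L \<and> 2 \<le> len a}"
  have lenpos: "\<And>a. a < L \<Longrightarrow> 1 \<le> len a" using ne1 unfolding len_def L_def
    by (metis One_nat_def Suc_leI length_greater_0_conv nth_mem)
  have blk: "\<And>a. a \<in> A \<Longrightarrow> \<beta> a \<in> blocks2 s1 s2"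
  proof -
    fix a assume a: "a \<in> A"
    then have aL: "a < L" and t2: "2 \<le> len a" unfolding A_def by auto
    have e1: "P1 ! a = take (len a) (drop (off P1 a) s1)" "off P1 a + len a \<le> n"
      using part_nth[of a P1] aL c1 l1 unfolding L_def len_def by auto
    have lp: "length (P2 ! p a) = len a" using pn[OF aL] len_def by simp
    have e2: "P2 ! p a = take (len a) (drop (off P2 (p a)) s2)" "off P2 (p a) + len a \<le> n"
      using part_nth[of "p a" P2] pL[OF aL] c2 l2 L2 lp by auto
    show "\<beta> a \<in> blocks2 s1 s2"
      unfolding blocks2_def is_block_def \<beta>_def substr_def
      using e1 e2 t2 l1 pn[OF aL] by auto
  qed
  define x where "x = map (\<lambda>i. bl ! i \<in> \<beta> ` A) [0..<?m] @ [True]"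
  have xi: "\<And>i. i < ?m \<Longrightarrow> x ! i = (bl ! i \<in> \<beta> ` A)" unfolding x_def by (simp add: nth_append)
  have ndisj: "\<And>a b. a \<in> A \<Longrightarrow> b \<in> A \<Longrightarrow> a \<noteq> b \<Longrightarrow> \<not> overlap (\<beta> a) (\<beta> b)"
  proof -
    fix a b assume a: "a \<in> A" and b: "b \<in> A" and ab: "a \<noteq> b"
    then have aL: "a < L" and bL: "b < L" unfolding A_def by auto
    have d1: "off P1 a + len a \<le> off P1 b \<or> off P1 b + len b \<le> off P1 a"
      using disj_parts[of a P1 b] aL bL ab unfolding L_def len_def by auto
    have d2: "off P2 (p a) + len a \<le> off P2 (p b) \<or> off P2 (p b) + len b \<le> off P2 (p a)"
      using disj_parts[of "p a" P2 "p b"] pL[OF aL] pL[OF bL] L2 pinj ab pn[OF aL] pn[OF bL]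
      unfolding len_def by auto
    show "\<not> overlap (\<beta> a) (\<beta> b)" unfolding not_overlap_iff using d1 d2
      by (simp add: \<beta>_def tt_def kk2_def)
  qed
  have feas: "mcsp_feasible bl x"
    unfolding mcsp_feasible_def
  proof (intro conjI allI impI)
    show "length x = ?m + 1" unfolding x_def by simp
    show "x ! ?m" unfolding x_def by (simp add: nth_append)
    fix i j assume i: "i < ?m" and j: "j < ?m" and h: "i \<noteq> j \<and> x ! i \<and> x ! j"
    then obtain a b where a: "a \<in> A" "bl ! i = \<beta> a" and b: "b \<in> A" "bl ! j = \<beta> b" using xi by auto
    have "bl ! i \<noteq> bl ! j" using db i j h by (simp add: nth_eq_iff_index_eq)
    then have "a \<noteq> b" using a b by auto
    then show "\<not> overlap (bl ! i) (bl ! j)" using ndisj a b by simp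
  qed
  have binj: "inj_on \<beta> A"
  proof (rule inj_onI)
    fix a b assume a: "a \<in> A" and b: "b \<in> A" and e: "\<beta> a = \<beta> b"
    show "a = b"
    proof (rule ccontr)
      assume "a \<noteq> b"
      then have "off P1 a + len a \<le> off P1 b \<or> off P1 b + len b \<le> off P1 a"
        using disj_parts[of a P1 b] a b unfolding A_def L_def len_def by auto
      moreover have "off P1 a = off P1 b" using e unfolding \<beta>_def by simp
      moreover have "2 \<le> len a" "2 \<le> len b" using a b unfolding A_def by auto
      ultimately show False by auto
    qed
  qed
  have bij: "bij_betw (\<lambda>i. bl ! i) {i. i < ?m \<and> x ! i} (\<beta> ` A)"
  proof (rule bij_betw_imageI)
    show "inj_on (\<lambda>i. bl ! i) {i. i < ?m \<and> x ! i}" using db by (auto intro!: inj_onI simp: nth_eq_iff_index_eq)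
    show "(\<lambda>i. bl ! i) ` {i. i < ?m \<and> x ! i} = \<beta> ` A"
    proof
      show "(\<lambda>i. bl ! i) ` {i. i < ?m \<and> x ! i} \<subseteq> \<beta> ` A" using xi by auto
      show "\<beta> ` A \<subseteq> (\<lambda>i. bl ! i) ` {i. i < ?m \<and> x ! i}"
      proof
        fix b assume b: "b \<in> \<beta> ` A"
        then have "b \<in> set bl" using blk sb by auto
        then obtain i where "i < ?m" "bl ! i = b" by (auto simp: in_set_conv_nth)
        then show "b \<in> (\<lambda>i. bl ! i) ` {i. i < ?m \<and> x ! i}" using xi b by auto
      qed
    qed
  qed
  have "(\<Sum>i \<in> {i. i < ?m \<and> x ! i}. 1 - int (snd (snd (bl ! i)))) = (\<Sum>b \<in> \<beta> ` A. 1 - int (snd (snd b)))"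
    using sum.reindex_bij_betw[OF bij, of "\<lambda>b. 1 - int (snd (snd b))"] by simp
  also have "\<dots> = (\<Sum>a\<in>A. 1 - int (len a))" using sum.reindex[OF binj, of "\<lambda>b. 1 - int (snd (snd b))"] by (simp add: \<beta>_def comp_def)
  also have "\<dots> = int (card A) - (\<Sum>a\<in>A. int (len a))" by (simp add: sum_subtractf)
  finally have s: "(\<Sum>i \<in> {i. i < ?m \<and> x ! i}. 1 - int (snd (snd (bl ! i)))) = int (card A) - (\<Sum>a\<in>A. int (len a))" .
  have AL: "A \<subseteq> {0..<L}" unfolding A_def by auto
  have "int n = (\<Sum>a\<in>{0..<L}. int (len a))"
  proof -
    have "n = sum_list (map length P1)" using c1 l1 length_concat[of P1] by simp
    also have "\<dots> = (\<Sum>a\<in>{0..<L}. len a)" unfolding sum_list_sum_nth L_def len_def by simp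
    finally show ?thesis by simp
  qed
  also have "\<dots> = (\<Sum>a\<in>A. int (len a)) + (\<Sum>a\<in>{0..<L} - A. int (len a))"
    using AL by (metis add.commute finite_atLeastLessThan sum.subset_diff)
  also have "(\<Sum>a\<in>{0..<L} - A. int (len a)) = (\<Sum>a\<in>{0..<L} - A. 1)"
  proof (rule sum.cong[OF refl])
    fix a assume "a \<in> {0..<L} - A"
    then have "a < L" "\<not> 2 \<le> len a" unfolding A_def by auto
    then show "int (len a) = 1" using lenpos by fastforce
  qed
  also have "\<dots> = int L - int (card A)"
  proof -
    have "card A \<le> L" using card_mono[OF _ AL] by simp
    then show ?thesis using AL by (simp add: card_Diff_subset finite_subset of_nat_diff)
  qed
  finally have "int n = (\<Sum>a\<in>A. int (len a)) + (int L - int (card A))" .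
  then have "mcsp_obj n bl x = int L" unfolding mcsp_obj_def using s by simp
  then show ?thesis using feas L_def by auto
qed



lemma len_le_concat: "[] \<notin> set P \<Longrightarrow> length P \<le> length (concat P)"
proof (induction P)
  case (Cons a P)
  then have "1 \<le> length a" by (cases a) auto
  then show ?case using Cons by simp
qed simp

theorem mainTheorem1:
  fixes s1 s2 :: "'a list" and n :: nat and bl :: "block list"
  assumes "length s1 = n" and "length s2 = n" and "related s1 s2"
    and "distinct bl" and "set bl = blocks2 s1 s2"
  shows "{path_assignment p | p. rT_path n bl p} = {x. mcsp_feasible bl x}
    \<and> (\<forall>p. rT_path n bl p \<longrightarrow> path_weight n p = mcsp_obj n bl (path_assignment p))
    \<and> (\<forall>x. mcsp_feasible bl x \<longrightarrow>
          (\<exists>P1 P2. common_partition s1 s2 P1 P2 \<and> mset P1 = assignment_parts s1 bl x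
                   \<and> int (length P1) = mcsp_obj n bl x))
    \<and> Opt_D n bl = Opt_MCSP n bl
    \<and> Min {path_weight n p | p. rT_path n bl p}
        = int (Min {length P1 | P1 P2. common_partition s1 s2 P1 P2})"
proof -
  note l1 = assms(1) and l2 = assms(2)
  have ms: "mset s1 = mset s2" using assms(3) unfolding related_def by simp
  have ok: "blockok s1 s2 bl" using blockok_of[OF assms(5)] .
  have rng: "inrange n bl" using ok l1 unfolding blockok_def inrange_def by auto
  have PC: "\<And>p. rT_path n bl p \<Longrightarrow> mcsp_feasible bl (path_assignment p) \<and> p = canon n bl (path_assignment p)"
    using path_canon[OF rng] by blast
  have CP: "\<And>x. mcsp_feasible bl x \<Longrightarrow> rT_path n bl (canon n bl x) \<and> path_assignment (canon n bl x) = x"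
    using canon_path[OF rng] by blast
  have W: "\<And>p. rT_path n bl p \<Longrightarrow> path_weight n p = mcsp_obj n bl (path_assignment p)"
  proof -
    fix p assume "rT_path n bl p"
    then have "p = canon n bl (path_assignment p)" using PC by blast
    then have "path_weight n p = path_weight n (canon n bl (path_assignment p))" by (rule arg_cong)
    also have "\<dots> = mcsp_obj n bl (path_assignment p)" by (rule canon_weight)
    finally show "path_weight n p = mcsp_obj n bl (path_assignment p)" .
  qed
  have P3: "\<And>x. mcsp_feasible bl x \<Longrightarrow> (\<exists>P1 P2. common_partition s1 s2 P1 P2 \<and> mset P1 = assignment_parts s1 bl x
                   \<and> int (length P1) = mcsp_obj n bl x)"
    using part3[OF l1 l2 ms ok] by blast
  have S1: "{path_assignment p | p. rT_path n bl p} = {x. mcsp_feasible bl x}"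
  proof
    show "{path_assignment p | p. rT_path n bl p} \<subseteq> {x. mcsp_feasible bl x}" using PC by blast
    show "{x. mcsp_feasible bl x} \<subseteq> {path_assignment p | p. rT_path n bl p}"
    proof
      fix x assume "x \<in> {x. mcsp_feasible bl x}"
      then have "rT_path n bl (canon n bl x) \<and> path_assignment (canon n bl x) = x" using CP by simp
      then show "x \<in> {path_assignment p | p. rT_path n bl p}" by (intro CollectI exI[of _ "canon n bl x"]) simp
    qed
  qed
  have S4: "Opt_D n bl = Opt_MCSP n bl"
  proof
    show "Opt_D n bl \<subseteq> Opt_MCSP n bl"
    proof
      fix x assume "x \<in> Opt_D n bl"
      then obtain p where p: "x = path_assignment p" "rT_path n bl p"
        "\<forall>q. rT_path n bl q \<longrightarrow> path_weight n p \<le> path_weight n q" unfolding Opt_D_def by blast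
      have fx: "mcsp_feasible bl x" using PC p by simp
      have "\<forall>y. mcsp_feasible bl y \<longrightarrow> mcsp_obj n bl x \<le> mcsp_obj n bl y"
      proof (intro allI impI)
        fix y assume "mcsp_feasible bl y"
        then have "rT_path n bl (canon n bl y)" "path_assignment (canon n bl y) = y" using CP by auto
        then have "path_weight n p \<le> path_weight n (canon n bl y)" using p(3) by blast
        moreover have "path_weight n (canon n bl y) = mcsp_obj n bl y" using canon_weight by blast
        moreover have "path_weight n p = mcsp_obj n bl x" using W p(1,2) by blast
        ultimately show "mcsp_obj n bl x \<le> mcsp_obj n bl y" by simp
      qed
      then show "x \<in> Opt_MCSP n bl" using fx unfolding Opt_MCSP_def by simp
    qed
    show "Opt_MCSP n bl \<subseteq> Opt_D n bl"
    proof
      fix x assume "x \<in> Opt_MCSP n bl"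
      then have fx: "mcsp_feasible bl x" and opt: "\<forall>y. mcsp_feasible bl y \<longrightarrow> mcsp_obj n bl x \<le> mcsp_obj n bl y"
        unfolding Opt_MCSP_def by auto
      have c: "rT_path n bl (canon n bl x)" "path_assignment (canon n bl x) = x" using CP fx by auto
      have "\<forall>q. rT_path n bl q \<longrightarrow> path_weight n (canon n bl x) \<le> path_weight n q"
      proof (intro allI impI)
        fix q assume q: "rT_path n bl q"
        then show "path_weight n (canon n bl x) \<le> path_weight n q"
          using W[OF q] W[OF c(1)] c(2) opt PC[OF q] by simp
      qed
      then show "x \<in> Opt_D n bl" using c unfolding Opt_D_def by (intro CollectI exI[of _ "canon n bl x"]) simp
    qed
  qed
  define S where "S = {length P1 | P1 P2. common_partition s1 s2 P1 P2}"
  have WS: "{path_weight n p | p. rT_path n bl p} = int ` S"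
  proof
    show "{path_weight n p | p. rT_path n bl p} \<subseteq> int ` S"
    proof
      fix w assume "w \<in> {path_weight n p | p. rT_path n bl p}"
      then obtain p where p: "rT_path n bl p" "w = path_weight n p" by blast
      then have "mcsp_feasible bl (path_assignment p)" using PC by simp
      then obtain P1 P2 where "common_partition s1 s2 P1 P2" "int (length P1) = mcsp_obj n bl (path_assignment p)"
        using P3 by blast
      moreover have "w = mcsp_obj n bl (path_assignment p)" using p W by simp
      ultimately show "w \<in> int ` S" unfolding S_def by (intro image_eqI[of _ _ "length P1"]) auto
    qed
    show "int ` S \<subseteq> {path_weight n p | p. rT_path n bl p}"
    proof
      fix w assume "w \<in> int ` S"
      then obtain P1 P2 where cp: "common_partition s1 s2 P1 P2" "w = int (length P1)" unfolding S_def by blast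
      obtain x where x: "mcsp_feasible bl x" "mcsp_obj n bl x = int (length P1)"
        using part5[OF l1 l2 assms(4,5) cp(1)] by blast
      have "rT_path n bl (canon n bl x)" "path_weight n (canon n bl x) = w"
        using CP x cp(2) canon_weight by auto
      then show "w \<in> {path_weight n p | p. rT_path n bl p}" by blast
    qed
  qed
  have finS: "finite S"
  proof (rule finite_subset)
    show "S \<subseteq> {..n}"
    proof
      fix k assume "k \<in> S"
      then obtain P1 P2 where "common_partition s1 s2 P1 P2" "k = length P1" unfolding S_def by blast
      then have "concat P1 = s1" "[] \<notin> set P1" "k = length P1" unfolding common_partition_def by auto
      then show "k \<in> {..n}" using len_le_concat[of P1] l1 by simp
    qed
  qed simp
  have neS: "S \<noteq> {}"
  proof -
    have "mcsp_feasible bl (replicate (length bl) False @ [True])"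
      unfolding mcsp_feasible_def by (simp add: nth_append)
    then show ?thesis using P3 unfolding S_def by blast
  qed
  have S5: "Min {path_weight n p | p. rT_path n bl p} = int (Min S)"
    unfolding WS using mono_Min_commute[of int S] finS neS by (simp add: mono_def)
  show ?thesis
  proof (intro conjI)
    show "{path_assignment p | p. rT_path n bl p} = {x. mcsp_feasible bl x}" by (fact S1)
    show "\<forall>p. rT_path n bl p \<longrightarrow> path_weight n p = mcsp_obj n bl (path_assignment p)" using W by blast
    show "\<forall>x. mcsp_feasible bl x \<longrightarrow>
          (\<exists>P1 P2. common_partition s1 s2 P1 P2 \<and> mset P1 = assignment_parts s1 bl x
                   \<and> int (length P1) = mcsp_obj n bl x)" using P3 by blast
    show "Opt_D n bl = Opt_MCSP n bl" by (fact S4)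
    show "Min {path_weight n p | p. rT_path n bl p}
        = int (Min {length P1 | P1 P2. common_partition s1 s2 P1 P2})" using S5 unfolding S_def .
  qed
qed


end
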